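(* Let $G$ be $\hbar$-perfect and let $G'$ be obtained from $G$ by copying one vertex $v$, i.e. adding a new vertex $v'$ whose neighbourhood is exactly the neighbourhood of $v$ in $G$ (so $v'$ is not adjacent to $v$). Then $G'$ is $\hbar$-perfect.
   Context: A realization of a graph $G$ on $\{1,\dots,n\}$ is a tuple $(S_1,\dots,S_n)$ of Pauli strings (tensor products of matrices from $\{I,X,Y,Z\}$) of common length with $S_i,S_j$ anticommuting iff $i\sim j$ and commuting otherwise; every graph has one. For $w\in\mathbb{R}^n_{\ge0}$, $\beta(G,w)=\sup_\rho\sum_iw_i\operatorname{tr}(\rho S_i)^2$ over density matrices $\rho$ (independent of the realization), and $\alpha(G,w)=\max\{\sum_{i\in I}w_i: I\text{ independent set of }G\}$. $G$ is $\hbar$-perfect if $\beta(G,w)=\alpha(G,w)$ for all $w\in\mathbb{R}^n_{\ge0}$. *)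

theory Defs
  imports Complex_Main "Jordan_Normal_Form.Matrix"
begin

text \<open>Graphs on the vertex set {0,...,n-1} (the paper's {1,...,n}, shifted),
  given by a symmetric irreflexive adjacency relation.\<close>

definition graph_on :: "nat \<Rightarrow> (nat \<Rightarrow> nat \<Rightarrow> bool) \<Rightarrow> bool" where
  "graph_on n E \<longleftrightarrow> (\<forall>i<n. \<forall>j<n. E i j = E j i) \<and> (\<forall>i<n. \<not> E i i)"

datatype pauli = PI | PX | PY | PZ

fun pauli_entry :: "pauli \<Rightarrow> nat \<Rightarrow> nat \<Rightarrow> complex" where
  "pauli_entry PI a b = (if a = b then 1 else 0)"
| "pauli_entry PX a b = (if a \<noteq> b then 1 else 0)"
| "pauli_entry PY a b = (if a = b then 0 else if a = 0 then - \<i> else \<i>)"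
| "pauli_entry PZ a b = (if a \<noteq> b then 0 else if a = 0 then 1 else -1)"

text \<open>The matrix of a Pauli string (tensor product of the factors), acting on
  (C^2)^{\<otimes> m}; the k-th tensor factor corresponds to bit k of the index.\<close>

definition pauli_string_mat :: "pauli list \<Rightarrow> complex mat" where
  "pauli_string_mat ps = (let m = length ps in
     mat (2 ^ m) (2 ^ m)
       (\<lambda>(i, j). \<Prod>k<m. pauli_entry (ps ! k) (i div 2 ^ k mod 2) (j div 2 ^ k mod 2)))"

definition realization :: "nat \<Rightarrow> (nat \<Rightarrow> nat \<Rightarrow> bool) \<Rightarrow> nat \<Rightarrow> (nat \<Rightarrow> pauli list) \<Rightarrow> bool" where
  "realization n E m S \<longleftrightarrow>
     (\<forall>i<n. length (S i) = m) \<and>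
     (\<forall>i<n. \<forall>j<n.
        (E i j \<longrightarrow> pauli_string_mat (S i) * pauli_string_mat (S j)
                      = - (pauli_string_mat (S j) * pauli_string_mat (S i))) \<and>
        (\<not> E i j \<longrightarrow> pauli_string_mat (S i) * pauli_string_mat (S j)
                      = pauli_string_mat (S j) * pauli_string_mat (S i)))"

definition mat_trace :: "complex mat \<Rightarrow> complex" where
  "mat_trace A = (\<Sum>i<dim_row A. A $$ (i, i))"

definition density_mat :: "nat \<Rightarrow> complex mat \<Rightarrow> bool" where
  "density_mat d \<rho> \<longleftrightarrow> \<rho> \<in> carrier_mat d d \<and>
     (\<forall>i<d. \<forall>j<d. \<rho> $$ (j, i) = cnj (\<rho> $$ (i, j))) \<and>
     (\<forall>x :: nat \<Rightarrow> complex. 0 \<le> Re (\<Sum>i<d. \<Sum>j<d. cnj (x i) * \<rho> $$ (i, j) * x j)) \<and>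
     mat_trace \<rho> = 1"

text \<open>beta(G,w) computed from the realization S (of common length m).
  Since rho and S_i are Hermitian, tr(rho S_i) is real.\<close>

definition beta :: "nat \<Rightarrow> nat \<Rightarrow> (nat \<Rightarrow> pauli list) \<Rightarrow> (nat \<Rightarrow> real) \<Rightarrow> real" where
  "beta n m S w = Sup {(\<Sum>i<n. w i * (Re (mat_trace (\<rho> * pauli_string_mat (S i))))\<^sup>2) | \<rho>.
                        density_mat (2 ^ m) \<rho>}"

definition independent_set :: "(nat \<Rightarrow> nat \<Rightarrow> bool) \<Rightarrow> nat set \<Rightarrow> bool" where
  "independent_set E I \<longleftrightarrow> (\<forall>i\<in>I. \<forall>j\<in>I. \<not> E i j)"

definition alpha :: "nat \<Rightarrow> (nat \<Rightarrow> nat \<Rightarrow> bool) \<Rightarrow> (nat \<Rightarrow> real) \<Rightarrow> real" where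
  "alpha n E w = Max {(\<Sum>i\<in>I. w i) | I. I \<subseteq> {..<n} \<and> independent_set E I}"

text \<open>hbar-perfect: beta = alpha for all nonnegative weights. beta is computed via
  an arbitrary realization (it is independent of the realization).\<close>

definition hbar_perfect :: "nat \<Rightarrow> (nat \<Rightarrow> nat \<Rightarrow> bool) \<Rightarrow> bool" where
  "hbar_perfect n E \<longleftrightarrow>
     (\<forall>m S w. realization n E m S \<longrightarrow> (\<forall>i<n. 0 \<le> w i) \<longrightarrow> beta n m S w = alpha n E w)"

definition copy_vertex :: "nat \<Rightarrow> (nat \<Rightarrow> nat \<Rightarrow> bool) \<Rightarrow> nat \<Rightarrow> (nat \<Rightarrow> nat \<Rightarrow> bool)" where
  "copy_vertex n E v = (\<lambda>i j. let c = (\<lambda>k. if k = n then v else k) in E (c i) (c j))"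

end

theory Submission
  imports Defs
begin


lemma bitsum:
  fixes F :: "nat \<Rightarrow> nat \<Rightarrow> complex"
  shows "(\<Sum>l<2^m. \<Prod>k<m. F k (l div 2^k mod 2)) = (\<Prod>k<m. \<Sum>b<2. F k b)"
proof (induction m)
  case 0
  then show ?case by simp
next
  case (Suc m)
  define M :: nat where "M = 2^m"
  have split: "(\<Sum>l<2^Suc m. g l) = (\<Sum>l<M. g l) + (\<Sum>l<M. g (l + M))" for g :: "nat \<Rightarrow> complex"
  proof -
    have "(\<Sum>l<2^Suc m. g l) = (\<Sum>l=0..<M+M. g l)" by (simp add: M_def lessThan_atLeast0 mult_2)
    also have "\<dots> = (\<Sum>l=0..<M. g l) + (\<Sum>l=M..<M+M. g l)"
      by (rule sum.atLeastLessThan_concat[symmetric]) auto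
    also have "(\<Sum>l=M..<M+M. g l) = (\<Sum>l=0..<M. g (l + M))"
      using sum.shift_bounds_nat_ivl[of g 0 M M] by simp
    finally show ?thesis by (simp add: lessThan_atLeast0)
  qed
  have lo: "(\<Prod>k<Suc m. F k (l div 2^k mod 2)) = (\<Prod>k<m. F k (l div 2^k mod 2)) * F m 0"
    if "l < M" for l
  proof -
    have "l div 2^m = 0" using that by (simp add: M_def)
    then show ?thesis by simp
  qed
  have hi: "(\<Prod>k<Suc m. F k ((l+M) div 2^k mod 2)) = (\<Prod>k<m. F k (l div 2^k mod 2)) * F m 1"
    if "l < M" for l
  proof -
    have a: "(l + M) div 2^m = 1" using that by (simp add: M_def)
    have b: "(l + M) div 2^k mod 2 = l div 2^k mod 2" if kk: "k < m" for k
    proof -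
      have "M = 2^k * 2^(m-k)" using that by (simp add: M_def flip: power_add)
      then have "(l + M) div 2^k = l div 2^k + 2^(m-k)" by simp
      moreover obtain j where j: "m - k = Suc j" using kk by (cases "m - k") auto
      moreover have "(a + 2 * b) mod 2 = a mod 2" for a b :: nat by simp
      ultimately have "(l + M) div 2^k mod 2 = (l div 2^k + 2 * 2^j) mod 2" by (simp only: power_Suc)
      then show ?thesis by simp
    qed
    have "(\<Prod>k<m. F k ((l+M) div 2^k mod 2)) = (\<Prod>k<m. F k (l div 2^k mod 2))"
      by (rule prod.cong) (simp_all add: b)
    then show ?thesis using a by simp
  qed
  have "(\<Sum>l<2^Suc m. \<Prod>k<Suc m. F k (l div 2^k mod 2))
     = (\<Sum>l<M. (\<Prod>k<m. F k (l div 2^k mod 2)) * F m 0) + (\<Sum>l<M. (\<Prod>k<m. F k (l div 2^k mod 2)) * F m 1)"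
    unfolding split by (intro arg_cong2[where f="(+)"] sum.cong refl) (simp_all only: lessThan_iff lo hi)
  also have "\<dots> = (\<Prod>k<m. \<Sum>b<2. F k b) * (F m 0 + F m 1)"
    using Suc by (simp add: M_def flip: sum_distrib_right distrib_left)
  also have "\<dots> = (\<Prod>k<Suc m. \<Sum>b<2. F k b)" by (simp add: numeral_2_eq_2)
  finally show ?case .
qed

lemma bits_eq:
  fixes i j :: nat
  assumes "i < 2^m" "j < 2^m" "\<forall>k<m. i div 2^k mod 2 = j div 2^k mod 2"
  shows "i = j"
proof -
  have "bit i n = bit j n" for n
  proof (cases "n < m")
    case True
    then show ?thesis using assms(3) by (simp add: bit_iff_odd odd_iff_mod_2_eq_one)
  next
    case False
    then have "(2::nat)^m \<le> 2^n" by simp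
    then have "i < 2^n" "j < 2^n" using assms(1,2) by linarith+
    then have "i div 2^n = 0" "j div 2^n = 0" by simp_all
    then show ?thesis by (simp add: bit_iff_odd)
  qed
  then show ?thesis by (simp add: bit_eq_iff)
qed

lemma PS_carrier: "pauli_string_mat s \<in> carrier_mat (2^length s) (2^length s)"
  by (simp add: pauli_string_mat_def Let_def)

lemma PS_dim[simp]: "dim_row (pauli_string_mat s) = 2^length s" "dim_col (pauli_string_mat s) = 2^length s"
  by (simp_all add: pauli_string_mat_def Let_def)

lemma PS_entry: "i < 2^length s \<Longrightarrow> j < 2^length s \<Longrightarrow> pauli_string_mat s $$ (i,j)
  = (\<Prod>k<length s. pauli_entry (s!k) (i div 2^k mod 2) (j div 2^k mod 2))"
  by (simp add: pauli_string_mat_def Let_def)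

lemma pauli_sq1: "a < 2 \<Longrightarrow> c < 2 \<Longrightarrow> (\<Sum>b<2. pauli_entry p a b * pauli_entry p b c) = (if a = c then 1 else 0)"
  by (cases p; auto simp: numeral_2_eq_2 less_Suc_eq)

lemma pauli_herm1: "a < 2 \<Longrightarrow> b < 2 \<Longrightarrow> cnj (pauli_entry p b a) = pauli_entry p a b"
  by (cases p; auto simp: numeral_2_eq_2 less_Suc_eq)

lemma PS_mult_entry:
  assumes "length t = length s" "i < 2^length s" "j < 2^length s"
  shows "(pauli_string_mat s * pauli_string_mat t) $$ (i,j) =
    (\<Prod>k<length s. \<Sum>b<2. pauli_entry (s!k) (i div 2^k mod 2) b * pauli_entry (t!k) b (j div 2^k mod 2))"
proof -
  let ?m = "length s"
  have "(pauli_string_mat s * pauli_string_mat t) $$ (i,j) = (\<Sum>l<2^?m. pauli_string_mat s $$ (i,l) * pauli_string_mat t $$ (l,j))"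
    using assms by (simp add: scalar_prod_def lessThan_atLeast0)
  also have "\<dots> = (\<Sum>l<2^?m. \<Prod>k<?m. pauli_entry (s!k) (i div 2^k mod 2) (l div 2^k mod 2) * pauli_entry (t!k) (l div 2^k mod 2) (j div 2^k mod 2))"
    by (rule sum.cong) (use assms in \<open>simp_all add: PS_entry prod.distrib\<close>)
  also have "\<dots> = (\<Prod>k<length s. \<Sum>b<2. pauli_entry (s!k) (i div 2^k mod 2) b * pauli_entry (t!k) b (j div 2^k mod 2))"
    using bitsum[of "\<lambda>k b. pauli_entry (s!k) (i div 2^k mod 2) b * pauli_entry (t!k) b (j div 2^k mod 2)" ?m] by simp
  finally show ?thesis .
qed

lemma PS_sq: "pauli_string_mat s * pauli_string_mat s = 1\<^sub>m (2^length s)"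
proof (rule eq_matI)
  fix i j assume ij: "i < dim_row (1\<^sub>m (2^length s) :: complex mat)" "j < dim_col (1\<^sub>m (2^length s) :: complex mat)"
  then have ij': "i < 2^length s" "j < 2^length s" by simp_all
  have "(pauli_string_mat s * pauli_string_mat s) $$ (i,j) = (\<Prod>k<length s. if i div 2^k mod 2 = j div 2^k mod 2 then 1 else 0)"
    unfolding PS_mult_entry[OF refl ij'] by (rule prod.cong) (simp_all add: pauli_sq1)
  also have "\<dots> = (if i = j then 1 else 0)"
  proof (cases "i = j")
    case True then show ?thesis by simp
  next
    case False
    then obtain k where "k < length s" "i div 2^k mod 2 \<noteq> j div 2^k mod 2" using bits_eq[OF ij'] by blast
    then have "(\<Prod>k<length s. if i div 2^k mod 2 = j div 2^k mod 2 then 1 else (0::complex)) = 0"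
      by (intro prod_zero) auto
    then show ?thesis using False by simp
  qed
  finally show "(pauli_string_mat s * pauli_string_mat s) $$ (i,j) = 1\<^sub>m (2^length s) $$ (i,j)" using ij' by simp
qed auto

lemma PS_herm: "i < 2^length s \<Longrightarrow> j < 2^length s \<Longrightarrow> cnj (pauli_string_mat s $$ (j,i)) = pauli_string_mat s $$ (i,j)"
  by (simp add: PS_entry pauli_herm1)



definition herm :: "nat \<Rightarrow> complex mat \<Rightarrow> bool" where
  "herm N A \<longleftrightarrow> (\<forall>i<N. \<forall>j<N. A $$ (j,i) = cnj (A $$ (i,j)))"

definition adj :: "complex mat \<Rightarrow> complex mat" where
  "adj A = mat (dim_col A) (dim_row A) (\<lambda>(i,j). cnj (A $$ (j,i)))"

lemma adj_carrier: "A \<in> carrier_mat n m \<Longrightarrow> adj A \<in> carrier_mat m n"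
  by (auto simp: adj_def)

lemma adj_mult: assumes "A \<in> carrier_mat n k" "B \<in> carrier_mat k m"
  shows "adj (A * B) = adj B * adj A"
  by (rule eq_matI) (use assms in \<open>auto simp: adj_def scalar_prod_def cnj_sum intro!: sum.cong\<close>)

lemma herm_adj: assumes "A \<in> carrier_mat N N" shows "herm N A \<longleftrightarrow> adj A = A"
proof
  assume h: "herm N A" note c = assms
  show "adj A = A"
  proof (rule eq_matI)
    fix i j assume "i < dim_row A" "j < dim_col A"
    then have ij: "i < N" "j < N" using c by auto
    have "A $$ (i,j) = cnj (A $$ (j,i))" using h ij unfolding herm_def by blast
    then show "adj A $$ (i,j) = A $$ (i,j)" using ij c by (simp add: adj_def)
  qed (use c in \<open>auto simp: adj_def\<close>)
next
  assume h: "adj A = A" note c = assms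
  show "herm N A" unfolding herm_def
  proof (intro allI impI)
    fix i j assume "i < N" "j < N"
    then have "adj A $$ (j,i) = cnj (A $$ (i,j))" using c by (simp add: adj_def)
    then show "A $$ (j,i) = cnj (A $$ (i,j))" using h by simp
  qed
qed

lemma mult_entry: "A \<in> carrier_mat N N \<Longrightarrow> B \<in> carrier_mat N N \<Longrightarrow> i < N \<Longrightarrow> j < N \<Longrightarrow>
  (A * B) $$ (i,j) = (\<Sum>k<N. A $$ (i,k) * B $$ (k,j))"
  by (simp add: scalar_prod_def lessThan_atLeast0)

lemma tr_cyc: "A \<in> carrier_mat N N \<Longrightarrow> B \<in> carrier_mat N N \<Longrightarrow> mat_trace (A * B) = mat_trace (B * A)"
proof -
  assume c: "A \<in> carrier_mat N N" "B \<in> carrier_mat N N"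
  have "mat_trace (A * B) = (\<Sum>i<N. \<Sum>k<N. A $$ (i,k) * B $$ (k,i))"
    unfolding mat_trace_def using c by (auto simp del: index_mult_mat(1) simp: mult_entry intro!: sum.cong)
  also have "\<dots> = (\<Sum>k<N. \<Sum>i<N. B $$ (k,i) * A $$ (i,k))"
    by (subst sum.swap) (simp add: mult.commute)
  also have "\<dots> = mat_trace (B * A)"
    unfolding mat_trace_def using c by (auto simp del: index_mult_mat(1) simp: mult_entry intro!: sum.cong)
  finally show ?thesis .
qed

lemma tr_add: "A \<in> carrier_mat N N \<Longrightarrow> B \<in> carrier_mat N N \<Longrightarrow> mat_trace (A + B) = mat_trace A + mat_trace B"
  unfolding mat_trace_def by (simp add: sum.distrib)

lemma tr_smult: "A \<in> carrier_mat N N \<Longrightarrow> mat_trace (c \<cdot>\<^sub>m A) = c * mat_trace A"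
  unfolding mat_trace_def by (simp add: sum_distrib_left)

lemma tr_uminus: "A \<in> carrier_mat N N \<Longrightarrow> mat_trace (- A) = - mat_trace A"
  unfolding mat_trace_def by (simp add: sum_negf)



locale invol =
  fixes N :: nat and T :: "complex mat"
  assumes T_car: "T \<in> carrier_mat N N" and TT: "T * T = 1\<^sub>m N" and T_adj: "adj T = T"
begin

definition P where "P = (1/2 :: complex) \<cdot>\<^sub>m (1\<^sub>m N + T)"
definition Q where "Q = (1/2 :: complex) \<cdot>\<^sub>m (1\<^sub>m N - T)"

lemma T_car'[simp]: "T \<in> carrier_mat N N" by (rule T_car)
lemma T_dim[simp]: "dim_row T = N" "dim_col T = N" using carrier_matD[OF T_car] by auto
lemma P_car[simp]: "P \<in> carrier_mat N N" and Q_car[simp]: "Q \<in> carrier_mat N N"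
  by (auto simp: P_def Q_def intro!: minus_carrier_mat)
lemma P_dim[simp]: "dim_row P = N" "dim_col P = N" "dim_row Q = N" "dim_col Q = N"
  using carrier_matD[OF P_car] carrier_matD[OF Q_car] by auto
lemma mT_car[simp]: "1\<^sub>m N - T \<in> carrier_mat N N" by (rule minus_carrier_mat) simp

lemma TP: "T * P = P"
proof -
  have "T * P = (1/2 :: complex) \<cdot>\<^sub>m (T * (1\<^sub>m N + T))"
    unfolding P_def by (rule mult_smult_distrib[where nc=N, OF T_car]) simp
  also have "T * (1\<^sub>m N + T) = T * 1\<^sub>m N + T * T"
    by (rule mult_add_distrib_mat[where nc=N, OF T_car]) auto
  also have "\<dots> = 1\<^sub>m N + T" using T_car TT by (simp add: comm_add_mat[of _ N N])
  finally show ?thesis by (simp add: P_def)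
qed

lemma TQ: "T * Q = - Q"
proof -
  have "T * Q = (1/2 :: complex) \<cdot>\<^sub>m (T * (1\<^sub>m N - T))"
    unfolding Q_def by (rule mult_smult_distrib[where nc=N, OF T_car]) simp
  also have "T * (1\<^sub>m N - T) = T * 1\<^sub>m N - T * T"
    by (rule mult_minus_distrib_mat[where nc=N, OF T_car]) auto
  also have "\<dots> = T - 1\<^sub>m N" using T_car TT by simp
  finally show ?thesis unfolding Q_def by (intro eq_matI) (use T_car in \<open>auto simp: field_simps\<close>)
qed

lemma PP: "P * P = P"
proof -
  have "P * P = (1/2 :: complex) \<cdot>\<^sub>m ((1\<^sub>m N + T) * P)"
    unfolding P_def by (rule mult_smult_assoc_mat[where nc=N]) (use T_car in auto)
  also have "(1\<^sub>m N + T) * P = 1\<^sub>m N * P + T * P"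
    by (rule add_mult_distrib_mat[where nc=N]) (use T_car in auto)
  also have "\<dots> = P + P" by (simp add: TP)
  finally show ?thesis by (intro eq_matI) (use T_car in \<open>auto simp: P_def\<close>)
qed

lemma QQ: "Q * Q = Q"
proof -
  have "Q * Q = (1/2 :: complex) \<cdot>\<^sub>m ((1\<^sub>m N - T) * Q)"
    unfolding Q_def by (rule mult_smult_assoc_mat[where nc=N]) (use T_car in auto)
  also have "(1\<^sub>m N - T) * Q = 1\<^sub>m N * Q - T * Q"
    by (rule minus_mult_distrib_mat[where nc=N]) (use T_car in auto)
  also have "\<dots> = Q + Q" unfolding TQ by (intro eq_matI) (use T_car in \<open>auto simp: Q_def\<close>)
  finally show ?thesis by (intro eq_matI) (use T_car in \<open>auto simp: Q_def\<close>)
qed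

lemma PQ: "P + Q = 1\<^sub>m N"
  by (intro eq_matI) (use T_car in \<open>auto simp: P_def Q_def field_simps\<close>)

lemma T_h: "i < N \<Longrightarrow> j < N \<Longrightarrow> cnj (T $$ (j,i)) = T $$ (i,j)"
  using T_adj herm_adj[OF T_car] unfolding herm_def by (metis complex_cnj_cnj)

lemma P_adj: "adj P = P"
proof (intro eq_matI)
  fix i j assume "i < dim_row P" "j < dim_col P"
  then have ij: "i < N" "j < N" by auto
  show "adj P $$ (i,j) = P $$ (i,j)" using ij T_h[OF ij] by (simp add: P_def adj_def)
qed (auto simp: adj_def)

lemma Q_adj: "adj Q = Q"
proof (intro eq_matI)
  fix i j assume "i < dim_row Q" "j < dim_col Q"
  then have ij: "i < N" "j < N" by auto
  show "adj Q $$ (i,j) = Q $$ (i,j)" using ij T_h[OF ij] by (simp add: Q_def adj_def)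
qed (auto simp: adj_def)

lemma comm_P: assumes "A \<in> carrier_mat N N" "A * T = T * A" shows "A * P = P * A"
proof -
  have "A * P = (1/2 :: complex) \<cdot>\<^sub>m (A * (1\<^sub>m N + T))"
    unfolding P_def by (rule mult_smult_distrib[where nc=N, OF assms(1)]) simp
  also have "A * (1\<^sub>m N + T) = A * 1\<^sub>m N + A * T" by (rule mult_add_distrib_mat[where nc=N, OF assms(1)]) auto
  finally have 1: "A * P = (1/2 :: complex) \<cdot>\<^sub>m (A + T * A)" using assms by simp
  have "P * A = (1/2 :: complex) \<cdot>\<^sub>m ((1\<^sub>m N + T) * A)"
    unfolding P_def by (rule mult_smult_assoc_mat[where nc=N]) (use assms in auto)
  also have "(1\<^sub>m N + T) * A = 1\<^sub>m N * A + T * A" by (rule add_mult_distrib_mat[where nc=N]) (use assms in auto)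
  finally have 2: "P * A = (1/2 :: complex) \<cdot>\<^sub>m (A + T * A)" using assms by simp
  show ?thesis using 1 2 by simp
qed

lemma comm_Q: assumes "A \<in> carrier_mat N N" "A * T = T * A" shows "A * Q = Q * A"
proof -
  have "A * Q = (1/2 :: complex) \<cdot>\<^sub>m (A * (1\<^sub>m N - T))"
    unfolding Q_def by (rule mult_smult_distrib[where nc=N, OF assms(1)]) simp
  also have "A * (1\<^sub>m N - T) = A * 1\<^sub>m N - A * T" by (rule mult_minus_distrib_mat[where nc=N, OF assms(1)]) auto
  finally have 1: "A * Q = (1/2 :: complex) \<cdot>\<^sub>m (A - T * A)" using assms by simp
  have "Q * A = (1/2 :: complex) \<cdot>\<^sub>m ((1\<^sub>m N - T) * A)"
    unfolding Q_def by (rule mult_smult_assoc_mat[where nc=N]) (use assms in auto)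
  also have "(1\<^sub>m N - T) * A = 1\<^sub>m N * A - T * A" by (rule minus_mult_distrib_mat[where nc=N]) (use assms in auto)
  finally have 2: "Q * A = (1/2 :: complex) \<cdot>\<^sub>m (A - T * A)" using assms by simp
  show ?thesis using 1 2 by simp
qed

end


definition qf :: "nat \<Rightarrow> complex mat \<Rightarrow> (nat \<Rightarrow> complex) \<Rightarrow> complex" where
  "qf N A x = (\<Sum>i<N. \<Sum>j<N. cnj (x i) * A $$ (i, j) * x j)"

lemma density_iff: "density_mat N \<rho> \<longleftrightarrow> \<rho> \<in> carrier_mat N N \<and> herm N \<rho> \<and> (\<forall>x. 0 \<le> Re (qf N \<rho> x)) \<and> mat_trace \<rho> = 1"
  unfolding density_mat_def herm_def qf_def by blast

lemma sum4: "(\<Sum>i<N. \<Sum>j<N. \<Sum>l<N. \<Sum>k<N. f i j l k) = (\<Sum>k<N. \<Sum>l<N. \<Sum>i<N. \<Sum>j<(N::nat). (f i j l k :: complex))"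
proof -
  have "(\<Sum>i<N. \<Sum>j<N. \<Sum>l<N. \<Sum>k<N. f i j l k) = (\<Sum>i<N. \<Sum>l<N. \<Sum>k<N. \<Sum>j<N. f i j l k)"
  proof (rule sum.cong[OF refl])
    fix i
    have "(\<Sum>j<N. \<Sum>l<N. \<Sum>k<N. f i j l k) = (\<Sum>l<N. \<Sum>j<N. \<Sum>k<N. f i j l k)" by (rule sum.swap)
    also have "\<dots> = (\<Sum>l<N. \<Sum>k<N. \<Sum>j<N. f i j l k)" by (rule sum.cong[OF refl], rule sum.swap)
    finally show "(\<Sum>j<N. \<Sum>l<N. \<Sum>k<N. f i j l k) = (\<Sum>l<N. \<Sum>k<N. \<Sum>j<N. f i j l k)" .
  qed
  also have "\<dots> = (\<Sum>l<N. \<Sum>i<N. \<Sum>k<N. \<Sum>j<N. f i j l k)" by (rule sum.swap)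
  also have "\<dots> = (\<Sum>l<N. \<Sum>k<N. \<Sum>i<N. \<Sum>j<N. f i j l k)" by (rule sum.cong[OF refl], rule sum.swap)
  also have "\<dots> = (\<Sum>k<N. \<Sum>l<N. \<Sum>i<N. \<Sum>j<N. f i j l k)" by (rule sum.swap)
  finally show ?thesis .
qed

lemma qf_conj:
  assumes A: "A \<in> carrier_mat N N" and r: "\<rho> \<in> carrier_mat N N" and h: "adj A = A"
  shows "qf N (A * \<rho> * A) x = qf N \<rho> (\<lambda>k. \<Sum>j<N. A $$ (k,j) * x j)"
proof -
  have hA: "cnj (A $$ (k,i)) = A $$ (i,k)" if "i < N" "k < N" for i k
  proof -
    have "adj A $$ (i,k) = cnj (A $$ (k,i))" using that A by (simp add: adj_def)
    then show ?thesis using h by simp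
  qed
  have e: "(A * \<rho> * A) $$ (i,j) = (\<Sum>l<N. \<Sum>k<N. A $$ (i,k) * \<rho> $$ (k,l) * A $$ (l,j))" if "i < N" "j < N" for i j
  proof -
    have "(A * \<rho> * A) $$ (i,j) = (\<Sum>k<N. \<Sum>l<N. A $$ (i,k) * \<rho> $$ (k,l) * A $$ (l,j))"
      using that A r by (simp add: mult_entry[of _ N] sum_distrib_left mult.assoc del: index_mult_mat(1))
    also have "\<dots> = (\<Sum>l<N. \<Sum>k<N. A $$ (i,k) * \<rho> $$ (k,l) * A $$ (l,j))" by (rule sum.swap)
    finally show ?thesis .
  qed
  have "qf N (A * \<rho> * A) x = (\<Sum>i<N. \<Sum>j<N. \<Sum>l<N. \<Sum>k<N. cnj (x i) * A $$ (i,k) * \<rho> $$ (k,l) * A $$ (l,j) * x j)"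
    unfolding qf_def by (intro sum.cong refl) (simp add: e sum_distrib_left sum_distrib_right mult.assoc)
  also have "\<dots> = (\<Sum>k<N. \<Sum>l<N. \<Sum>i<N. \<Sum>j<N. cnj (x i) * A $$ (i,k) * \<rho> $$ (k,l) * A $$ (l,j) * x j)"
    by (rule sum4)
  also have "\<dots> = qf N \<rho> (\<lambda>k. \<Sum>j<N. A $$ (k,j) * x j)"
    unfolding qf_def
    by (intro sum.cong refl) (simp add: cnj_sum hA sum_distrib_left sum_distrib_right mult.assoc mult.left_commute, rule sum.swap)
  finally show ?thesis .
qed

lemma sum_one: fixes g :: "nat \<Rightarrow> complex" shows "a < N \<Longrightarrow> (\<Sum>j<N. g j * (if j = a then u else 0)) = g a * (u::complex)"
proof -
  assume a: "a < N"
  have "(\<Sum>j<N. g j * (if j = a then u else 0)) = (\<Sum>j<N. if j = a then g a * u else 0)" by (rule sum.cong) auto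
  then show ?thesis using a by simp
qed

lemma sum_one': fixes g :: "nat \<Rightarrow> complex" shows "a < N \<Longrightarrow> (\<Sum>j<N. (if j = a then u else 0) * g j) = u * g a"
  using sum_one[of a N g u] by (simp add: mult.commute)

lemma sum_two: fixes g :: "nat \<Rightarrow> complex" shows "a \<noteq> b \<Longrightarrow> a < N \<Longrightarrow> b < N \<Longrightarrow>
  (\<Sum>j<N. g j * (if j = a then u else if j = b then v else 0)) = g a * u + g b * (v::complex)"
proof -
  assume ab: "a \<noteq> b" "a < N" "b < N"
  have "(\<Sum>j<N. g j * (if j = a then u else if j = b then v else 0)) = (\<Sum>j<N. (if j = a then g a * u else 0) + (if j = b then g b * v else 0))"
    using ab by (intro sum.cong) auto
  then show ?thesis using ab by (simp add: sum.distrib)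
qed

lemma sum_two': fixes g :: "nat \<Rightarrow> complex" shows "a \<noteq> b \<Longrightarrow> a < N \<Longrightarrow> b < N \<Longrightarrow>
  (\<Sum>j<N. (if j = a then u else if j = b then v else 0) * g j) = u * g a + v * (g b::complex)"
  using sum_two[of a b N g u v] by (simp add: mult.commute)

lemma diag_pos: assumes p: "\<forall>x. 0 \<le> Re (qf N \<sigma> x)" and i: "i < N" shows "0 \<le> Re (\<sigma> $$ (i,i))"
proof -
  have "qf N \<sigma> (\<lambda>k. if k = i then 1 else 0) = \<sigma> $$ (i,i)"
    unfolding qf_def using i by (simp add: sum_one sum_one' if_distrib[of cnj] cong: if_cong)
  then show ?thesis using p by metis
qed

lemma diag_real: assumes h: "herm N \<sigma>" and i: "i < N" shows "Im (\<sigma> $$ (i,i)) = 0"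
proof -
  have "\<sigma> $$ (i,i) = cnj (\<sigma> $$ (i,i))" using h i unfolding herm_def by blast
  then show ?thesis by (metis complex_cnj_cancel_iff complex.sel(2) cnj.sel(2) neg_equal_zero)
qed

lemma trace_real: assumes c: "\<sigma> \<in> carrier_mat N N" and h: "herm N \<sigma>" and p: "\<forall>x. 0 \<le> Re (qf N \<sigma> x)"
  shows "mat_trace \<sigma> = of_real (Re (mat_trace \<sigma>))" "0 \<le> Re (mat_trace \<sigma>)"
proof -
  have "Im (mat_trace \<sigma>) = 0" using c diag_real[OF h] unfolding mat_trace_def by (simp add: Im_sum)
  then show "mat_trace \<sigma> = of_real (Re (mat_trace \<sigma>))" by (simp add: complex_eq_iff)
  show "0 \<le> Re (mat_trace \<sigma>)" using c diag_pos[OF p] unfolding mat_trace_def by (auto simp: Re_sum intro!: sum_nonneg)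
qed

lemma psd_zero:
  assumes c: "\<sigma> \<in> carrier_mat N N" and h: "herm N \<sigma>" and p: "\<forall>x. 0 \<le> Re (qf N \<sigma> x)"
    and t: "mat_trace \<sigma> = 0"
  shows "\<forall>i<N. \<forall>j<N. \<sigma> $$ (i,j) = 0"
proof -
  note diagpos = diag_pos[OF p] and diagreal = diag_real[OF h]
  have "(\<Sum>i<N. Re (\<sigma> $$ (i,i))) = 0" using t c unfolding mat_trace_def by (simp flip: Re_sum)
  then have "\<forall>i\<in>{..<N}. Re (\<sigma> $$ (i,i)) = 0" using diagpos by (subst sum_nonneg_eq_0_iff[symmetric]) auto
  then have diag0: "\<sigma> $$ (i,i) = 0" if "i < N" for i using diagreal[OF that] that by (simp add: complex_eq_iff)
  show ?thesis
  proof (intro allI impI)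
    fix a b assume ab: "a < N" "b < N"
    show "\<sigma> $$ (a,b) = 0"
    proof (cases "a = b")
      case True then show ?thesis using diag0 ab by simp
    next
      case False
      define t where "t = - cnj (\<sigma> $$ (a,b))"
      have hb: "\<sigma> $$ (b,a) = cnj (\<sigma> $$ (a,b))" using h ab unfolding herm_def by blast
      have "qf N \<sigma> (\<lambda>k. if k = a then 1 else if k = b then t else 0)
          = \<sigma> $$ (a,a) + \<sigma> $$ (a,b) * t + cnj t * \<sigma> $$ (b,a) + cnj t * \<sigma> $$ (b,b) * t"
      proof -
        define x where "x = (\<lambda>k. if k = a then 1 else if k = b then t else (0::complex))"
        have cx: "cnj (x k) = (if k = a then 1 else if k = b then cnj t else 0)" for k by (simp add: x_def)
        have "qf N \<sigma> x = (\<Sum>i<N. cnj (x i) * (\<sigma> $$ (i,a) + \<sigma> $$ (i,b) * t))"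
          unfolding qf_def
        proof (rule sum.cong[OF refl])
          fix i
          have "(\<Sum>j<N. cnj (x i) * \<sigma> $$ (i, j) * x j) = cnj (x i) * \<sigma> $$ (i, a) * 1 + cnj (x i) * \<sigma> $$ (i, b) * t"
            unfolding x_def by (rule sum_two[OF False ab])
          then show "(\<Sum>j<N. cnj (x i) * \<sigma> $$ (i, j) * x j) = cnj (x i) * (\<sigma> $$ (i,a) + \<sigma> $$ (i,b) * t)"
            by (simp add: algebra_simps)
        qed
        also have "\<dots> = 1 * (\<sigma> $$ (a,a) + \<sigma> $$ (a,b) * t) + cnj t * (\<sigma> $$ (b,a) + \<sigma> $$ (b,b) * t)"
          unfolding cx by (rule sum_two'[OF False ab])
        finally show ?thesis by (simp add: x_def algebra_simps)
      qed
      also have "\<dots> = - 2 * (\<sigma> $$ (a,b) * cnj (\<sigma> $$ (a,b)))"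
        using diag0 ab hb by (simp add: t_def algebra_simps)
      also have "\<sigma> $$ (a,b) * cnj (\<sigma> $$ (a,b)) = of_real ((cmod (\<sigma> $$ (a,b)))\<^sup>2)"
        by (rule complex_norm_square[symmetric])
      finally have "0 \<le> - 2 * (cmod (\<sigma> $$ (a,b)))\<^sup>2"
        using p by (metis Re_complex_of_real mult_minus_left of_real_minus of_real_mult of_real_numeral)
      then show ?thesis by simp
    qed
  qed
qed



lemma convex_sq: fixes p q x y :: real assumes "0 \<le> p" "0 \<le> q" "p + q = 1"
  shows "(p*x + q*y)\<^sup>2 \<le> p*x\<^sup>2 + q*y\<^sup>2"
proof -
  have "p*x\<^sup>2 + q*y\<^sup>2 - (p*x + q*y)\<^sup>2 = p*q*(x-y)\<^sup>2"
  proof -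
    have q: "q = 1 - p" using assms(3) by simp
    show ?thesis unfolding q by (simp add: power2_eq_square algebra_simps)
  qed
  moreover have "0 \<le> p*q*(x-y)\<^sup>2" using assms by simp
  ultimately show ?thesis by linarith
qed

lemma herm_conj: assumes r: "\<rho> \<in> carrier_mat N N" "herm N \<rho>" and X: "X \<in> carrier_mat N N" "adj X = X"
  shows "herm N (X * \<rho> * X)"
proof -
  have ar: "adj \<rho> = \<rho>" using herm_adj r by blast
  have "adj (X * \<rho> * X) = adj X * adj (X * \<rho>)" by (rule adj_mult[of _ N N _ N]) (use r X in auto)
  also have "adj (X * \<rho>) = adj \<rho> * adj X" by (rule adj_mult[of _ N N _ N]) (use r X in auto)
  finally have "adj (X * \<rho> * X) = X * \<rho> * X" using ar X r by simp
  then show ?thesis using herm_adj[of "X * \<rho> * X" N] r X by auto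
qed

lemma psd_conj: assumes r: "\<rho> \<in> carrier_mat N N" "\<forall>x. 0 \<le> Re (qf N \<rho> x)" and X: "X \<in> carrier_mat N N" "adj X = X"
  shows "\<forall>x. 0 \<le> Re (qf N (X * \<rho> * X) x)"
  using qf_conj[OF X(1) r(1) X(2)] r(2) by simp

lemma density_scale:
  assumes c: "\<sigma> \<in> carrier_mat N N" and h: "herm N \<sigma>" and p: "\<forall>x. 0 \<le> Re (qf N \<sigma> x)"
    and t: "mat_trace \<sigma> = of_real r" and r: "r > 0"
  shows "density_mat N (of_real (1/r) \<cdot>\<^sub>m \<sigma>)"
  unfolding density_iff
proof (intro conjI allI)
  show "of_real (1/r) \<cdot>\<^sub>m \<sigma> \<in> carrier_mat N N" using c by simp
  show "herm N (of_real (1/r) \<cdot>\<^sub>m \<sigma>)" unfolding herm_def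
  proof (intro allI impI)
    fix i j assume ij: "i < N" "j < N"
    have "\<sigma> $$ (j,i) = cnj (\<sigma> $$ (i,j))" using h ij unfolding herm_def by blast
    then show "(of_real (1/r) \<cdot>\<^sub>m \<sigma>) $$ (j,i) = cnj ((of_real (1/r) \<cdot>\<^sub>m \<sigma>) $$ (i,j))"
      using ij c by simp
  qed
  fix x
  have "qf N (of_real (1/r) \<cdot>\<^sub>m \<sigma>) x = of_real (1/r) * qf N \<sigma> x"
    unfolding qf_def using c by (auto simp: sum_distrib_left algebra_simps intro!: sum.cong)
  then show "0 \<le> Re (qf N (of_real (1/r) \<cdot>\<^sub>m \<sigma>) x)" using p r by simp
next
  show "mat_trace (of_real (1/r) \<cdot>\<^sub>m \<sigma>) = 1" using tr_smult[OF c] t r by simp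
qed

context invol begin

lemma assocN: "A \<in> carrier_mat N N \<Longrightarrow> B \<in> carrier_mat N N \<Longrightarrow> C \<in> carrier_mat N N \<Longrightarrow> A * B * C = A * (B * C)"
  by (rule assoc_mult_mat) auto

lemma carN[simp]: "A \<in> carrier_mat N N \<Longrightarrow> B \<in> carrier_mat N N \<Longrightarrow> A * B \<in> carrier_mat N N"
  by (rule mult_carrier_mat)

lemma tr_T: assumes r: "\<rho> \<in> carrier_mat N N" and A: "A \<in> carrier_mat N N" and s: "T * \<rho> = s \<cdot>\<^sub>m \<rho>"
  shows "mat_trace (\<rho> * (A * T)) = s * mat_trace (\<rho> * A)"
proof -
  have "mat_trace (\<rho> * (A * T)) = mat_trace ((\<rho> * A) * T)" using r A by (simp add: assocN)
  also have "\<dots> = mat_trace (T * (\<rho> * A))" by (rule tr_cyc) (use r A in auto)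
  also have "\<dots> = mat_trace ((T * \<rho>) * A)" using r A by (simp add: assocN)
  also have "\<dots> = mat_trace (s \<cdot>\<^sub>m (\<rho> * A))" unfolding s using r A by (simp add: mult_smult_assoc_mat)
  finally show ?thesis using tr_smult[of "\<rho> * A" N s] r A by simp
qed

lemma decomp: assumes r: "\<rho> \<in> carrier_mat N N" and A: "A \<in> carrier_mat N N" "A * T = T * A"
  shows "mat_trace (\<rho> * A) = mat_trace (P * \<rho> * P * A) + mat_trace (Q * \<rho> * Q * A)"
proof -
  have AP: "A * P = P * A" and AQ: "A * Q = Q * A" using comm_P[OF A] comm_Q[OF A] by auto
  have "mat_trace (P * \<rho> * P * A) = mat_trace (P * (\<rho> * P * A))" using r A by (simp add: assocN)
  also have "\<dots> = mat_trace ((\<rho> * P * A) * P)" by (rule tr_cyc) (use r A in auto)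
  also have "(\<rho> * P * A) * P = \<rho> * (P * A * P)" using r A by (simp add: assocN)
  also have "P * A * P = A * P" using AP PP A by (metis P_car assoc_mult_mat)
  finally have 1: "mat_trace (P * \<rho> * P * A) = mat_trace (\<rho> * (A * P))" .
  have "mat_trace (Q * \<rho> * Q * A) = mat_trace (Q * (\<rho> * Q * A))" using r A by (simp add: assocN)
  also have "\<dots> = mat_trace ((\<rho> * Q * A) * Q)" by (rule tr_cyc) (use r A in auto)
  also have "(\<rho> * Q * A) * Q = \<rho> * (Q * A * Q)" using r A by (simp add: assocN)
  also have "Q * A * Q = A * Q" using AQ QQ A by (metis Q_car assoc_mult_mat)
  finally have 2: "mat_trace (Q * \<rho> * Q * A) = mat_trace (\<rho> * (A * Q))" .
  have "\<rho> * (A * P) + \<rho> * (A * Q) = \<rho> * (A * P + A * Q)"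
    by (rule mult_add_distrib_mat[symmetric]) (use r A in auto)
  also have "A * P + A * Q = A * (P + Q)" by (rule mult_add_distrib_mat[symmetric]) (use A in auto)
  also have "\<dots> = A" using PQ A by simp
  finally have 3: "\<rho> * (A * P) + \<rho> * (A * Q) = \<rho> * A" .
  show ?thesis unfolding 1 2 using tr_add[of "\<rho> * (A * P)" N "\<rho> * (A * Q)"] 3 r A by simp
qed

lemma split:
  assumes rho: "density_mat N \<rho>" and fin: "finite J" and c: "\<forall>i\<in>J. 0 \<le> c i"
    and B: "\<forall>i\<in>J. B i \<in> carrier_mat N N \<and> B i * T = T * B i"
  shows "\<exists>\<rho>'. density_mat N \<rho>' \<and> (\<exists>s. (s = 1 \<or> s = -1) \<and> T * \<rho>' = s \<cdot>\<^sub>m \<rho>') \<and>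
     (\<Sum>i\<in>J. c i * (Re (mat_trace (\<rho> * B i)))\<^sup>2) \<le> (\<Sum>i\<in>J. c i * (Re (mat_trace (\<rho>' * B i)))\<^sup>2)"
proof -
  from rho have rc: "\<rho> \<in> carrier_mat N N" and rh: "herm N \<rho>" and rp: "\<forall>x. 0 \<le> Re (qf N \<rho> x)"
    and rt: "mat_trace \<rho> = 1" unfolding density_iff by auto
  define \<sigma>1 where "\<sigma>1 = P * \<rho> * P"
  define \<sigma>2 where "\<sigma>2 = Q * \<rho> * Q"
  have c1: "\<sigma>1 \<in> carrier_mat N N" and c2: "\<sigma>2 \<in> carrier_mat N N" using rc by (simp_all add: \<sigma>1_def \<sigma>2_def)
  have h1: "herm N \<sigma>1" unfolding \<sigma>1_def by (rule herm_conj[OF rc rh P_car P_adj])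
  have h2: "herm N \<sigma>2" unfolding \<sigma>2_def by (rule herm_conj[OF rc rh Q_car Q_adj])
  have p1: "\<forall>x. 0 \<le> Re (qf N \<sigma>1 x)" unfolding \<sigma>1_def by (rule psd_conj[OF rc rp P_car P_adj])
  have p2: "\<forall>x. 0 \<le> Re (qf N \<sigma>2 x)" unfolding \<sigma>2_def by (rule psd_conj[OF rc rp Q_car Q_adj])
  define p where "p = Re (mat_trace \<sigma>1)"
  define q where "q = Re (mat_trace \<sigma>2)"
  have tp: "mat_trace \<sigma>1 = of_real p" and p0: "0 \<le> p" using trace_real[OF c1 h1 p1] by (simp_all add: p_def)
  have tq: "mat_trace \<sigma>2 = of_real q" and q0: "0 \<le> q" using trace_real[OF c2 h2 p2] by (simp_all add: q_def)
  have dec: "mat_trace (\<rho> * A) = mat_trace (\<sigma>1 * A) + mat_trace (\<sigma>2 * A)" if "A \<in> carrier_mat N N" "A * T = T * A" for A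
    unfolding \<sigma>1_def \<sigma>2_def by (rule decomp[OF rc that])
  have "mat_trace \<rho> = mat_trace \<sigma>1 + mat_trace \<sigma>2"
    using dec[of "1\<^sub>m N"] rc c1 c2 by simp
  then have pq: "p + q = 1" using rt tp tq by (metis Re_complex_of_real of_real_1 of_real_add)
  have Ts1: "T * \<sigma>1 = 1 \<cdot>\<^sub>m \<sigma>1"
  proof -
    have "T * \<sigma>1 = \<sigma>1" unfolding \<sigma>1_def using rc TP by (simp flip: assocN)
    also have "\<dots> = 1 \<cdot>\<^sub>m \<sigma>1" by (intro eq_matI) (use c1 in auto)
    finally show ?thesis .
  qed
  have Ts2: "T * \<sigma>2 = (-1) \<cdot>\<^sub>m \<sigma>2"
  proof -
    have "T * \<sigma>2 = (T * Q) * \<rho> * Q" unfolding \<sigma>2_def using rc by (simp add: assocN)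
    also have "\<dots> = (-1) \<cdot>\<^sub>m \<sigma>2" unfolding TQ \<sigma>2_def using rc
      by (intro eq_matI) (auto simp: assocN)
    finally show ?thesis .
  qed
  define \<rho>1 where "\<rho>1 = (of_real (1/p) :: complex) \<cdot>\<^sub>m \<sigma>1"
  define \<rho>2 where "\<rho>2 = (of_real (1/q) :: complex) \<cdot>\<^sub>m \<sigma>2"
  have zero_or: "mat_trace (\<sigma> * A) = of_real r * mat_trace ((of_real (1/r) :: complex) \<cdot>\<^sub>m \<sigma> * A)"
    if "\<sigma> \<in> carrier_mat N N" "herm N \<sigma>" "\<forall>x. 0 \<le> Re (qf N \<sigma> x)" "mat_trace \<sigma> = of_real r" "A \<in> carrier_mat N N"
    for \<sigma> r A
  proof (cases "r = 0")
    case True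
    then have "\<forall>i<N. \<forall>j<N. \<sigma> $$ (i,j) = 0" using psd_zero[OF that(1-3)] that(4) by simp
    then have "mat_trace (\<sigma> * A) = 0" using that unfolding mat_trace_def
      by (auto simp: mult_entry[of _ N] simp del: index_mult_mat(1) intro!: sum.neutral)
    then show ?thesis using True by simp
  next
    case False
    have "(of_real (1/r) :: complex) \<cdot>\<^sub>m \<sigma> * A = (of_real (1/r) :: complex) \<cdot>\<^sub>m (\<sigma> * A)"
      by (rule mult_smult_assoc_mat) (use that in auto)
    then show ?thesis using False tr_smult[of "\<sigma> * A" N] that by simp
  qed
  define K where "K = (\<lambda>\<tau>. (\<Sum>i\<in>J. c i * (Re (mat_trace (\<tau> * B i)))\<^sup>2))"
  have Kle: "K \<rho> \<le> p * K \<rho>1 + q * K \<rho>2"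
  proof -
    have "K \<rho> \<le> (\<Sum>i\<in>J. c i * (p * (Re (mat_trace (\<rho>1 * B i)))\<^sup>2 + q * (Re (mat_trace (\<rho>2 * B i)))\<^sup>2))"
      unfolding K_def
    proof (rule sum_mono)
      fix i assume i: "i \<in> J"
      have e: "Re (mat_trace (\<rho> * B i)) = p * Re (mat_trace (\<rho>1 * B i)) + q * Re (mat_trace (\<rho>2 * B i))"
        using dec[of "B i"] B i zero_or[OF c1 h1 p1 tp, of "B i"] zero_or[OF c2 h2 p2 tq, of "B i"]
        unfolding \<rho>1_def \<rho>2_def by simp
      show "c i * (Re (mat_trace (\<rho> * B i)))\<^sup>2 \<le> c i * (p * (Re (mat_trace (\<rho>1 * B i)))\<^sup>2 + q * (Re (mat_trace (\<rho>2 * B i)))\<^sup>2)"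
        unfolding e using c i convex_sq[OF p0 q0 pq] by (simp add: mult_left_mono)
    qed
    also have "\<dots> = p * K \<rho>1 + q * K \<rho>2" unfolding K_def by (simp add: sum.distrib sum_distrib_left algebra_simps)
    finally show ?thesis .
  qed
  have d1: "density_mat N \<rho>1" if "p > 0" unfolding \<rho>1_def by (rule density_scale[OF c1 h1 p1 tp that])
  have d2: "density_mat N \<rho>2" if "q > 0" unfolding \<rho>2_def by (rule density_scale[OF c2 h2 p2 tq that])
  have T1: "T * \<rho>1 = 1 \<cdot>\<^sub>m \<rho>1" unfolding \<rho>1_def
    by (subst mult_smult_distrib[where nc=N, OF T_car c1]) (simp add: Ts1, intro eq_matI, use c1 in auto)
  have T2: "T * \<rho>2 = (-1) \<cdot>\<^sub>m \<rho>2" unfolding \<rho>2_def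
    by (subst mult_smult_distrib[where nc=N, OF T_car c2]) (simp add: Ts2, intro eq_matI, use c2 in auto)
  show ?thesis
  proof (cases "q > 0 \<and> (p = 0 \<or> K \<rho>1 \<le> K \<rho>2)")
    case True
    have "p * K \<rho>1 + q * K \<rho>2 \<le> K \<rho>2"
    proof (cases "p = 0")
      case True then show ?thesis using pq by simp
    next
      case False
      then have "K \<rho>1 \<le> K \<rho>2" using \<open>q > 0 \<and> _\<close> by auto
      then have "p * K \<rho>1 \<le> p * K \<rho>2" using p0 by (simp add: mult_left_mono)
      moreover have "q * K \<rho>2 = K \<rho>2 - p * K \<rho>2" using pq by (metis add_diff_cancel_left' distrib_right mult_1)
      ultimately show ?thesis by linarith
    qed
    then show ?thesis using True d2 T2 Kle unfolding K_def by (intro exI[of _ \<rho>2]) auto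
  next
    case False
    then have pp: "p > 0" using pq p0 q0 by auto
    have "p * K \<rho>1 + q * K \<rho>2 \<le> K \<rho>1"
    proof (cases "q = 0")
      case True then show ?thesis using pq by simp
    next
      case qn: False
      then have "K \<rho>2 \<le> K \<rho>1" using False q0 pp by auto
      then have "q * K \<rho>2 \<le> q * K \<rho>1" using q0 by (simp add: mult_left_mono)
      moreover have "p * K \<rho>1 = K \<rho>1 - q * K \<rho>1" using pq by (metis add_diff_cancel_right' distrib_right mult_1)
      ultimately show ?thesis by linarith
    qed
    then show ?thesis using d1[OF pp] T1 Kle unfolding K_def by (intro exI[of _ \<rho>1]) auto
  qed
qed

end


lemma Sup_same:
  fixes X Y :: "real set"
  assumes "\<forall>x\<in>X. \<exists>y\<in>Y. x \<le> y" "\<forall>y\<in>Y. \<exists>x\<in>X. y \<le> x"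
  shows "Sup X = Sup Y"
proof -
  have "(\<lambda>z. \<forall>x\<in>X. x \<le> z) = (\<lambda>z. \<forall>x\<in>Y. x \<le> z)"
  proof (intro ext iffI ballI)
    fix z y assume "\<forall>x\<in>X. x \<le> z" "y \<in> Y"
    then show "y \<le> z" using assms(2) by (meson order_trans)
  next
    fix z x assume "\<forall>x\<in>Y. x \<le> z" "x \<in> X"
    then show "x \<le> z" using assms(1) by (meson order_trans)
  qed
  then show ?thesis by (simp add: Sup_real_def)
qed

lemma Max_same:
  fixes X Y :: "real set"
  assumes "finite X" "finite Y" "X \<noteq> {}" "Y \<noteq> {}" "\<forall>x\<in>X. \<exists>y\<in>Y. x \<le> y" "\<forall>y\<in>Y. \<exists>x\<in>X. y \<le> x"
  shows "Max X = Max Y"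
proof (rule antisym)
  show "Max X \<le> Max Y" using assms by (meson Max.boundedI Max_ge order_trans)
  show "Max Y \<le> Max X" using assms by (meson Max.boundedI Max_ge order_trans)
qed

lemma alpha_copy:
  assumes g: "graph_on n E" and v: "v < n" and w: "\<forall>i<Suc n. 0 \<le> w i"
  shows "alpha (Suc n) (copy_vertex n E v) w = alpha n E (\<lambda>i. if i = v then w v + w n else w i)"
proof -
  define E' where "E' = copy_vertex n E v"
  define w' where "w' = (\<lambda>i. if i = v then w v + w n else w i)"
  have E'lt: "E' i j = E i j" if "i < n" "j < n" for i j using that by (simp add: E'_def copy_vertex_def)
  have E'n: "E' n j = E v j" "E' j n = E j v" if "j < n" for j using that by (simp_all add: E'_def copy_vertex_def)
  have Enn: "\<not> E' n n" using g v by (simp add: E'_def copy_vertex_def graph_on_def)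
  have sw: "sum w' I = sum w I + (if v \<in> I then w n else 0)" if "I \<subseteq> {..<n}" for I
  proof -
    have fin: "finite I" using that finite_subset by blast
    have "sum w' I = (\<Sum>i\<in>I. w i + (if i = v then w n else 0))"
      using that v by (intro sum.cong) (auto simp: w'_def)
    also have "\<dots> = sum w I + (if v \<in> I then w n else 0)"
      using fin by (simp add: sum.distrib)
    finally show ?thesis .
  qed
  define X where "X = {(\<Sum>i\<in>I. w i) | I. I \<subseteq> {..<Suc n} \<and> independent_set E' I}"
  define Y where "Y = {(\<Sum>i\<in>I. w' i) | I. I \<subseteq> {..<n} \<and> independent_set E I}"
  have fX: "finite X" unfolding X_def
    by (rule finite_subset[of _ "(\<lambda>I. sum w I) ` Pow {..<Suc n}"]) auto
  have fY: "finite Y" unfolding Y_def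
    by (rule finite_subset[of _ "(\<lambda>I. sum w' I) ` Pow {..<n}"]) auto
  have nX: "X \<noteq> {}" unfolding X_def independent_set_def by (auto intro!: exI[of _ "{}"])
  have nY: "Y \<noteq> {}" unfolding Y_def independent_set_def by (auto intro!: exI[of _ "{}"])
  have XY: "\<forall>x\<in>X. \<exists>y\<in>Y. x \<le> y"
  proof
    fix x assume "x \<in> X"
    then obtain I where I: "I \<subseteq> {..<Suc n}" "independent_set E' I" "x = sum w I" unfolding X_def by auto
    show "\<exists>y\<in>Y. x \<le> y"
    proof (cases "n \<in> I")
      case False
      then have In: "I \<subseteq> {..<n}" using I(1) by (auto simp: less_Suc_eq)
      have "independent_set E I" using I(2) In E'lt unfolding independent_set_def by (metis lessThan_iff subsetD)
      moreover have "x \<le> sum w' I" using sw[OF In] I(3) w by simp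
      ultimately show ?thesis unfolding Y_def using In by blast
    next
      case True
      define J where "J = insert v (I - {n})"
      have Jn: "J \<subseteq> {..<n}" using I(1) v by (auto simp: J_def less_Suc_eq)
      have "independent_set E J" unfolding independent_set_def
      proof (intro ballI)
        fix i j assume ij: "i \<in> J" "j \<in> J"
        have ij': "i < n" "j < n" using ij Jn by auto
        define i' where "i' = (if i = v then n else i)"
        define j' where "j' = (if j = v then n else j)"
        have "i' \<in> I" "j' \<in> I" using ij True by (auto simp: J_def i'_def j'_def)
        then have "\<not> E' i' j'" using I(2) unfolding independent_set_def by blast
        moreover have "E' i' j' = E i j" using ij' v
          by (auto simp: i'_def j'_def E'_def copy_vertex_def)
        ultimately show "\<not> E i j" by simp
      qed
      moreover have "x \<le> sum w' J"
      proof -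
        have fI: "finite I" using I(1) finite_subset by blast
        have "x = w n + sum w (I - {n})" using I(3) True fI by (simp add: sum.remove)
        also have "\<dots> \<le> sum w J + w n"
        proof (cases "v \<in> I")
          case True
          then have "J = I - {n}" using v by (auto simp: J_def)
          then show ?thesis by simp
        next
          case False
          then have "sum w J = w v + sum w (I - {n})" using fI by (simp add: J_def)
          then show ?thesis using w v by simp
        qed
        also have "\<dots> = sum w' J" using sw[OF Jn] by (simp add: J_def)
        finally show ?thesis .
      qed
      ultimately show ?thesis unfolding Y_def using Jn by blast
    qed
  qed
  have YX: "\<forall>y\<in>Y. \<exists>x\<in>X. y \<le> x"
  proof
    fix y assume "y \<in> Y"
    then obtain J where J: "J \<subseteq> {..<n}" "independent_set E J" "y = sum w' J" unfolding Y_def by auto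
    have fJ: "finite J" using J(1) finite_subset by blast
    show "\<exists>x\<in>X. y \<le> x"
    proof (cases "v \<in> J")
      case False
      have "independent_set E' J" using J(1,2) E'lt unfolding independent_set_def by (metis lessThan_iff subsetD)
      moreover have "y = sum w J" using sw[OF J(1)] J(3) False by simp
      moreover have "J \<subseteq> {..<Suc n}" using J(1) by auto
      ultimately show ?thesis unfolding X_def by auto
    next
      case True
      define I where "I = insert n J"
      have nJ: "n \<notin> J" using J(1) by auto
      have "independent_set E' I" unfolding independent_set_def
      proof (intro ballI)
        fix i j assume ij: "i \<in> I" "j \<in> I"
        define i' where "i' = (if i = n then v else i)"
        define j' where "j' = (if j = n then v else j)"
        have "i' \<in> J" "j' \<in> J" using ij True by (auto simp: I_def i'_def j'_def)
        then have "\<not> E i' j'" using J(2) unfolding independent_set_def by blast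
        moreover have "E' i j = E i' j'" using ij J(1) v
          by (auto simp: I_def i'_def j'_def E'_def copy_vertex_def)
        ultimately show "\<not> E' i j" by simp
      qed
      moreover have "y = sum w I" using sw[OF J(1)] J(3) True nJ fJ by (simp add: I_def)
      moreover have "I \<subseteq> {..<Suc n}" using J(1) by (auto simp: I_def)
      ultimately show ?thesis unfolding X_def by auto
    qed
  qed
  have "Max X = Max Y" by (rule Max_same[OF fX fY nX nY XY YX])
  then show ?thesis unfolding alpha_def X_def Y_def E'_def w'_def .
qed



theorem mainTheorem7:
  fixes n v :: nat and E :: "nat \<Rightarrow> nat \<Rightarrow> bool"
  assumes "graph_on n E"
    and "v < n"
    and "hbar_perfect n E"
  shows "hbar_perfect (Suc n) (copy_vertex n E v)"
  unfolding hbar_perfect_def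
proof (intro allI impI)
  fix m S and w :: "nat \<Rightarrow> real"
  assume R: "realization (Suc n) (copy_vertex n E v) m S" and W: "\<forall>i<Suc n. 0 \<le> w i"
  note g = assms(1) and v = assms(2)
  define E' where "E' = copy_vertex n E v"
  define w' where "w' = (\<lambda>i. if i = v then w v + w n else w i)"
  have E'lt: "E' i j = E i j" if "i < n" "j < n" for i j using that by (simp add: E'_def copy_vertex_def)
  have E'vn: "\<not> E' v n" using g v by (simp add: E'_def copy_vertex_def graph_on_def)
  have E'in: "E' i n = E' i v" for i using v by (simp add: E'_def copy_vertex_def)
  have R0: "realization n E m S" using R E'lt unfolding realization_def E'_def[symmetric]
    by (metis less_SucI)
  have W': "\<forall>i<n. 0 \<le> w' i" using W by (simp add: w'_def)
  have hb: "beta n m S w' = alpha n E w'" using assms(3) R0 W' unfolding hbar_perfect_def by blast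
  have ha: "alpha (Suc n) E' w = alpha n E w'" unfolding E'_def w'_def by (rule alpha_copy[OF g v W])
  define N :: nat where "N = 2^m"
  define A where "A = (\<lambda>i. pauli_string_mat (S i))"
  have len: "length (S i) = m" if "i < Suc n" for i using R that unfolding realization_def by blast
  have Ac: "A i \<in> carrier_mat N N" if "i < Suc n" for i
    using PS_carrier[of "S i"] len[OF that] by (simp add: A_def N_def)
  have Asq: "A i * A i = 1\<^sub>m N" if "i < Suc n" for i
    using PS_sq[of "S i"] len[OF that] by (simp add: A_def N_def)
  have Aadj: "adj (A i) = A i" if "i < Suc n" for i
  proof -
    have "herm N (A i)" unfolding herm_def A_def
      using PS_herm[of _ "S i"] len[OF that] by (metis N_def complex_cnj_cnj)
    then show ?thesis using herm_adj[OF Ac[OF that]] by simp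
  qed
  have Acomm: "A i * A j = A j * A i" if "i < Suc n" "j < Suc n" "\<not> E' i j" for i j
    using R that unfolding realization_def E'_def A_def by blast
  have Aanti: "A i * A j = - (A j * A i)" if "i < Suc n" "j < Suc n" "E' i j" for i j
    using R that unfolding realization_def E'_def A_def by blast
  have vS: "v < Suc n" and nS: "n < Suc n" using v by auto
  define T where "T = A v * A n"
  have Tc: "T \<in> carrier_mat N N" unfolding T_def by (rule mult_carrier_mat[OF Ac[OF vS] Ac[OF nS]])
  have cv: "A v \<in> carrier_mat N N" and cn: "A n \<in> carrier_mat N N" using Ac[OF vS] Ac[OF nS] .
  have vn: "A v * A n = A n * A v" using Acomm[OF vS nS E'vn] .
  have a3: "X * Y * Z = X * (Y * Z)" if "X \<in> carrier_mat N N" "Y \<in> carrier_mat N N" "Z \<in> carrier_mat N N" for X Y Z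
    using that by (rule assoc_mult_mat)
  have mc: "X * Y \<in> carrier_mat N N" if "X \<in> carrier_mat N N" "Y \<in> carrier_mat N N" for X Y
    using that by (rule mult_carrier_mat)
  have TT: "T * T = 1\<^sub>m N"
  proof -
    have "T * T = A v * (A n * A v) * A n" unfolding T_def using cv cn by (simp add: a3 mc)
    also have "\<dots> = (A v * A v) * (A n * A n)" unfolding vn[symmetric] using cv cn by (simp add: a3 mc)
    also have "\<dots> = 1\<^sub>m N" using Asq[OF vS] Asq[OF nS] by simp
    finally show ?thesis .
  qed
  have Tadj: "adj T = T"
    unfolding T_def using adj_mult[OF Ac[OF vS] Ac[OF nS]] Aadj[OF vS] Aadj[OF nS] vn by simp
  interpret invol N T using Tc TT Tadj by unfold_locales
  have AT: "A i * T = T * A i" if "i < Suc n" for i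
  proof (cases "E' i v")
    case True
    then have "E' i n" using E'in by simp
    have "A i * T = (A i * A v) * A n" unfolding T_def using cv cn Ac[OF that] by (simp add: a3)
    also have "\<dots> = - (A v * A i) * A n" using Aanti[OF that vS True] by simp
    also have "\<dots> = - (A v * (A i * A n))" using cv cn Ac[OF that] by (simp add: a3)
    also have "\<dots> = - (A v * (- (A n * A i)))" using Aanti[OF that nS \<open>E' i n\<close>] by simp
    also have "\<dots> = T * A i" unfolding T_def using cv cn Ac[OF that] by (simp add: a3)
    finally show ?thesis .
  next
    case False
    then have "\<not> E' i n" using E'in by simp
    have "A i * T = (A i * A v) * A n" unfolding T_def using cv cn Ac[OF that] by (simp add: a3)
    also have "\<dots> = (A v * A i) * A n" using Acomm[OF that vS False] by simp
    also have "\<dots> = A v * (A i * A n)" using cv cn Ac[OF that] by (simp add: a3)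
    also have "\<dots> = A v * (A n * A i)" using Acomm[OF that nS \<open>\<not> E' i n\<close>] by simp
    also have "\<dots> = T * A i" unfolding T_def using cv cn Ac[OF that] by (simp add: a3)
    finally show ?thesis .
  qed
  have AnT: "A n = A v * T"
  proof -
    have "A v * T = (A v * A v) * A n" unfolding T_def using cv cn by (simp add: a3)
    then show ?thesis using Asq[OF vS] Ac[OF nS] by simp
  qed
  define F where "F = (\<lambda>\<rho>. \<Sum>i<Suc n. w i * (Re (mat_trace (\<rho> * A i)))\<^sup>2)"
  define H where "H = (\<lambda>\<rho>. \<Sum>i<n. w' i * (Re (mat_trace (\<rho> * A i)))\<^sup>2)"
  have FH: "F \<rho> = H \<rho>" if d: "density_mat N \<rho>" and s: "s = 1 \<or> s = -1" "T * \<rho> = s \<cdot>\<^sub>m \<rho>" for \<rho> s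
  proof -
    have rc: "\<rho> \<in> carrier_mat N N" using d unfolding density_iff by blast
    have "mat_trace (\<rho> * A n) = s * mat_trace (\<rho> * A v)"
      unfolding AnT by (rule tr_T[OF rc Ac[OF vS] s(2)])
    then have sq: "(Re (mat_trace (\<rho> * A n)))\<^sup>2 = (Re (mat_trace (\<rho> * A v)))\<^sup>2" using s(1) by auto
    have "H \<rho> = (\<Sum>i<n. w i * (Re (mat_trace (\<rho> * A i)))\<^sup>2 + (if i = v then w n * (Re (mat_trace (\<rho> * A v)))\<^sup>2 else 0))"
      unfolding H_def w'_def by (intro sum.cong) (auto simp: algebra_simps)
    also have "\<dots> = (\<Sum>i<n. w i * (Re (mat_trace (\<rho> * A i)))\<^sup>2) + w n * (Re (mat_trace (\<rho> * A v)))\<^sup>2"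
      using v by (simp add: sum.distrib)
    also have "\<dots> = F \<rho>" unfolding F_def using sq by simp
    finally show ?thesis by simp
  qed
  have beta1: "beta (Suc n) m S w = Sup {F \<rho> | \<rho>. density_mat N \<rho>}"
    unfolding beta_def F_def A_def N_def ..
  have beta2: "beta n m S w' = Sup {H \<rho> | \<rho>. density_mat N \<rho>}"
    unfolding beta_def H_def A_def N_def ..
  have "Sup {F \<rho> | \<rho>. density_mat N \<rho>} = Sup {H \<rho> | \<rho>. density_mat N \<rho>}"
  proof (rule Sup_same)
    show "\<forall>x\<in>{F \<rho> | \<rho>. density_mat N \<rho>}. \<exists>y\<in>{H \<rho> | \<rho>. density_mat N \<rho>}. x \<le> y"
    proof
      fix x assume "x \<in> {F \<rho> | \<rho>. density_mat N \<rho>}"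
      then obtain \<rho> where r: "density_mat N \<rho>" "x = F \<rho>" by blast
      obtain \<rho>' s where r': "density_mat N \<rho>'" "s = 1 \<or> s = -1" "T * \<rho>' = s \<cdot>\<^sub>m \<rho>'" "F \<rho> \<le> F \<rho>'"
        using split[OF r(1), of "{..<Suc n}" w A] W Ac AT unfolding F_def by auto
      then show "\<exists>y\<in>{H \<rho> | \<rho>. density_mat N \<rho>}. x \<le> y" using FH[OF r'(1-3)] r(2) by auto
    qed
    show "\<forall>x\<in>{H \<rho> | \<rho>. density_mat N \<rho>}. \<exists>y\<in>{F \<rho> | \<rho>. density_mat N \<rho>}. x \<le> y"
    proof
      fix x assume "x \<in> {H \<rho> | \<rho>. density_mat N \<rho>}"
      then obtain \<rho> where r: "density_mat N \<rho>" "x = H \<rho>" by blast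
      obtain \<rho>' s where r': "density_mat N \<rho>'" "s = 1 \<or> s = -1" "T * \<rho>' = s \<cdot>\<^sub>m \<rho>'" "H \<rho> \<le> H \<rho>'"
        using split[OF r(1), of "{..<n}" w' A] W' Ac AT unfolding H_def by auto
      then show "\<exists>y\<in>{F \<rho> | \<rho>. density_mat N \<rho>}. x \<le> y" using FH[OF r'(1-3)] r(2) by auto
    qed
  qed
  then show "beta (Suc n) m S w = alpha (Suc n) (copy_vertex n E v) w"
    using beta1 beta2 hb ha unfolding E'_def by simp
qed


end
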